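(* Let $\mathbf{I}$ be a $d$-system of ideals in a ring $R$ and $A:=\mathscr{A}(R,\mathbf{I})$. For all $1\le k\le d$, there is an isomorphism of left $A$-modules $\Delta_k\cong J_{k-1}T_{d+1-k}$.
   Context: A $d$-system of ideals in $R$ is a collection $\{I_{ij}\mid1\le i,j\le d+1\}$ of two-sided ideals with $I_{ij}I_{jk}\subset I_{ik}$ and $I_{ij}=R$ for $i\ge j$. $\mathscr{A}(R,\mathbf{I}):=\bigoplus_{1\le i,j\le d}X_{ij}$, $X_{ij}:=I_{ij}/I_{i,d+1}$, with multiplication $(x+I_{i,d+1})(y+I_{k,d+1})=\delta_{jk}(xy+I_{i,d+1})\in X_{il}$ for $x\in I_{ij},y\in I_{kl}$. Put $e_k:=1+I_{k,d+1}\in X_{kk}$, $f_j:=\sum_{k>j}e_k$ for $0\le j\le d$ ($f_0=1$, $f_d=0$), $J_j:=Af_jA$, $\Delta_k:=(A/J_k)e_k$. Define $\mathbb{T}_{kl}:=R/I_{k,d+2-l}$ and $T_j:=\bigoplus_{i=1}^d\mathbb{T}_{ij}$, a left $A$-module via $(x+I_{i,d+1})\cdot(r+I_{k,d+2-l})=\delta_{jk}(xr+I_{i,d+2-l})\in\mathbb{T}_{il}$ for $x\in I_{ij}$, $r\in R$. *)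

theory Defs
  imports "HOL-Algebra.Algebra" "HOL-Algebra.Ideal_Product"
begin

definition d_system :: "('a,'m) ring_scheme \<Rightarrow> nat \<Rightarrow> (nat \<Rightarrow> nat \<Rightarrow> 'a set) \<Rightarrow> bool" where
  "d_system R d I \<longleftrightarrow> ring R \<and>
     (\<forall>i\<in>{1..d+1}. \<forall>j\<in>{1..d+1}. ideal (I i j) R) \<and>
     (\<forall>i\<in>{1..d+1}. \<forall>j\<in>{1..d+1}. \<forall>k\<in>{1..d+1}. ideal_prod R (I i j) (I j k) \<subseteq> I i k) \<and>
     (\<forall>i\<in>{1..d+1}. \<forall>j\<in>{1..d+1}. j \<le> i \<longrightarrow> I i j = carrier R)"

definition rep :: "'a set \<Rightarrow> 'a" where
  "rep C = (SOME x. x \<in> C)"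

text \<open>X_ij = I_ij / I_{i,d+1}, as the set of cosets x + I_{i,d+1} with x in I_ij.\<close>
definition Xset :: "('a,'m) ring_scheme \<Rightarrow> nat \<Rightarrow> (nat \<Rightarrow> nat \<Rightarrow> 'a set) \<Rightarrow> nat \<Rightarrow> nat \<Rightarrow> 'a set set" where
  "Xset R d I i j = (\<lambda>x. I i (d+1) +>\<^bsub>R\<^esub> x) ` I i j"

text \<open>The algebra A(R,I) = direct sum of the X_ij (1 \<le> i,j \<le> d), elements written as
  d\<times>d arrays of cosets (entries outside the index range are the dummy value {}).
  Multiplication: (x_ij)(y_kl) = delta_jk (x y + I_{i,d+1}).\<close>
definition Alg :: "('a,'m) ring_scheme \<Rightarrow> nat \<Rightarrow> (nat \<Rightarrow> nat \<Rightarrow> 'a set) \<Rightarrow> (nat \<Rightarrow> nat \<Rightarrow> 'a set) ring" where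
  "Alg R d I = \<lparr>
     carrier = {M. \<forall>i j. if i \<in> {1..d} \<and> j \<in> {1..d} then M i j \<in> Xset R d I i j else M i j = {}},
     monoid.mult = (\<lambda>M N i l. if i \<in> {1..d} \<and> l \<in> {1..d}
              then I i (d+1) +>\<^bsub>R\<^esub> (\<Oplus>\<^bsub>R\<^esub>j\<in>{1..d}. rep (M i j) \<otimes>\<^bsub>R\<^esub> rep (N j l)) else {}),
     monoid.one = (\<lambda>i j. if i \<in> {1..d} \<and> j \<in> {1..d}
              then I i (d+1) +>\<^bsub>R\<^esub> (if i = j then \<one>\<^bsub>R\<^esub> else \<zero>\<^bsub>R\<^esub>) else {}),
     ring.zero = (\<lambda>i j. if i \<in> {1..d} \<and> j \<in> {1..d} then I i (d+1) +>\<^bsub>R\<^esub> \<zero>\<^bsub>R\<^esub> else {}),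
     ring.add = (\<lambda>M N i j. if i \<in> {1..d} \<and> j \<in> {1..d}
              then I i (d+1) +>\<^bsub>R\<^esub> (rep (M i j) \<oplus>\<^bsub>R\<^esub> rep (N i j)) else {}) \<rparr>"

definition idem_e :: "('a,'m) ring_scheme \<Rightarrow> nat \<Rightarrow> (nat \<Rightarrow> nat \<Rightarrow> 'a set) \<Rightarrow> nat \<Rightarrow> (nat \<Rightarrow> nat \<Rightarrow> 'a set)" where
  "idem_e R d I k = (\<lambda>i j. if i \<in> {1..d} \<and> j \<in> {1..d}
       then I i (d+1) +>\<^bsub>R\<^esub> (if i = k \<and> j = k then \<one>\<^bsub>R\<^esub> else \<zero>\<^bsub>R\<^esub>) else {})"

definition idem_f :: "('a,'m) ring_scheme \<Rightarrow> nat \<Rightarrow> (nat \<Rightarrow> nat \<Rightarrow> 'a set) \<Rightarrow> nat \<Rightarrow> (nat \<Rightarrow> nat \<Rightarrow> 'a set)" where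
  "idem_f R d I j = (\<Oplus>\<^bsub>Alg R d I\<^esub>k\<in>{j<..d}. idem_e R d I k)"

definition Jid :: "('a,'m) ring_scheme \<Rightarrow> nat \<Rightarrow> (nat \<Rightarrow> nat \<Rightarrow> 'a set) \<Rightarrow> nat \<Rightarrow> (nat \<Rightarrow> nat \<Rightarrow> 'a set) set" where
  "Jid R d I j = Idl\<^bsub>Alg R d I\<^esub> {idem_f R d I j}"

record ('r, 'v) lmod =
  lcarrier :: "'v set"
  ladd :: "'v \<Rightarrow> 'v \<Rightarrow> 'v"
  lact :: "'r \<Rightarrow> 'v \<Rightarrow> 'v"

definition lmod_iso :: "('r,'n) ring_scheme \<Rightarrow> ('r,'v) lmod \<Rightarrow> ('r,'w) lmod \<Rightarrow> bool" where
  "lmod_iso A M N \<longleftrightarrow> (\<exists>\<phi>. bij_betw \<phi> (lcarrier M) (lcarrier N) \<and>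
     (\<forall>x\<in>lcarrier M. \<forall>y\<in>lcarrier M. \<phi> (ladd M x y) = ladd N (\<phi> x) (\<phi> y)) \<and>
     (\<forall>a\<in>carrier A. \<forall>x\<in>lcarrier M. \<phi> (lact M a x) = lact N a (\<phi> x)))"

definition Delta :: "('a,'m) ring_scheme \<Rightarrow> nat \<Rightarrow> (nat \<Rightarrow> nat \<Rightarrow> 'a set) \<Rightarrow> nat
    \<Rightarrow> (nat \<Rightarrow> nat \<Rightarrow> 'a set, (nat \<Rightarrow> nat \<Rightarrow> 'a set) set) lmod" where
  "Delta R d I k = (let A = Alg R d I; J = Jid R d I k; Q = A Quot J in
     \<lparr> lcarrier = {x \<otimes>\<^bsub>Q\<^esub> (J +>\<^bsub>A\<^esub> idem_e R d I k) | x. x \<in> carrier Q},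
       ladd = add Q,
       lact = (\<lambda>a m. (J +>\<^bsub>A\<^esub> a) \<otimes>\<^bsub>Q\<^esub> m) \<rparr>)"

text \<open>T_j = direct sum over i = 1..d of R / I_{i,d+2-j}, with the A-action
  (x + I_{i,d+1}) (r + I_{k,d+2-j}) = delta (x r + I_{i,d+2-j}) for x in I_ik.\<close>
definition Tmod :: "('a,'m) ring_scheme \<Rightarrow> nat \<Rightarrow> (nat \<Rightarrow> nat \<Rightarrow> 'a set) \<Rightarrow> nat
    \<Rightarrow> (nat \<Rightarrow> nat \<Rightarrow> 'a set, nat \<Rightarrow> 'a set) lmod" where
  "Tmod R d I j = \<lparr>
     lcarrier = {t. \<forall>i. if i \<in> {1..d} then t i \<in> a_rcosets\<^bsub>R\<^esub> (I i (d+2-j)) else t i = {}},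
     ladd = (\<lambda>t s i. if i \<in> {1..d} then I i (d+2-j) +>\<^bsub>R\<^esub> (rep (t i) \<oplus>\<^bsub>R\<^esub> rep (s i)) else {}),
     lact = (\<lambda>M t i. if i \<in> {1..d}
              then I i (d+2-j) +>\<^bsub>R\<^esub> (\<Oplus>\<^bsub>R\<^esub>k\<in>{1..d}. rep (M i k) \<otimes>\<^bsub>R\<^esub> rep (t k)) else {}) \<rparr>"

text \<open>The product J N of a (left) ideal J of A and a left A-module N: all finite sums of
  elements a \<cdot> t with a in J and t in N (together with 0).\<close>
inductive_set prod_sub :: "'v \<Rightarrow> ('r,'v) lmod \<Rightarrow> 'r set \<Rightarrow> 'v set"
  for z :: 'v and N :: "('r,'v) lmod" and J :: "'r set" where
    zero: "z \<in> prod_sub z N J"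
  | gen: "a \<in> J \<Longrightarrow> t \<in> lcarrier N \<Longrightarrow> lact N a t \<in> prod_sub z N J"
  | add: "x \<in> prod_sub z N J \<Longrightarrow> y \<in> prod_sub z N J \<Longrightarrow> ladd N x y \<in> prod_sub z N J"

definition Tzero :: "('a,'m) ring_scheme \<Rightarrow> nat \<Rightarrow> (nat \<Rightarrow> nat \<Rightarrow> 'a set) \<Rightarrow> nat \<Rightarrow> nat \<Rightarrow> 'a set" where
  "Tzero R d I j = (\<lambda>i. if i \<in> {1..d} then I i (d+2-j) +>\<^bsub>R\<^esub> \<zero>\<^bsub>R\<^esub> else {})"

definition JT :: "('a,'m) ring_scheme \<Rightarrow> nat \<Rightarrow> (nat \<Rightarrow> nat \<Rightarrow> 'a set) \<Rightarrow> nat \<Rightarrow> nat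
    \<Rightarrow> (nat \<Rightarrow> nat \<Rightarrow> 'a set, nat \<Rightarrow> 'a set) lmod" where
  "JT R d I m j = (let T = Tmod R d I j in
     T\<lparr> lcarrier := prod_sub (Tzero R d I j) T (Jid R d I m) \<rparr>)"

end

theory Submission
  imports Defs
begin


lemma (in ring) cos_eq:
  assumes "ideal K R" "x \<in> carrier R" "y \<in> carrier R" "x \<ominus> y \<in> K"
  shows "K +> x = K +> y"
proof -
  interpret K: ideal K R by fact
  have "x \<in> K +> y"
    using K.a_rcos_module_minus[OF ring_axioms assms(3,2)] assms(4) by simp
  then show ?thesis using K.a_repr_independence' assms(3) by metis
qed

lemma (in ring) cos_eqD:
  assumes "ideal K R" "x \<in> carrier R" "y \<in> carrier R" "K +> x = K +> y"
  shows "x \<ominus> y \<in> K"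
proof -
  interpret K: ideal K R by fact
  have "x \<in> K +> y" using assms K.a_rcos_self by metis
  then show ?thesis
    using K.a_rcos_module_minus[OF ring_axioms assms(3,2)] by simp
qed

lemma (in ring) rep_in:
  assumes "ideal K R" "x \<in> carrier R"
  shows "rep (K +> x) \<in> K +> x"
proof -
  interpret K: ideal K R by fact
  have "x \<in> K +> x" using K.a_rcos_self assms by simp
  then show ?thesis unfolding rep_def by (rule someI)
qed

lemma (in ring) rep_carr:
  assumes "ideal K R" "x \<in> carrier R"
  shows "rep (K +> x) \<in> carrier R"
proof -
  interpret K: ideal K R by fact
  show ?thesis using rep_in[OF assms] K.a_elemrcos_carrier assms(2) by blast
qed

lemma (in ring) rep_diff:
  assumes "ideal K R" "x \<in> carrier R"
  shows "rep (K +> x) \<ominus> x \<in> K"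
proof -
  interpret K: ideal K R by fact
  show ?thesis using rep_in[OF assms] K.a_rcos_module_minus[OF ring_axioms assms(2) rep_carr[OF assms]]
    by simp
qed

lemma (in ring) rep_coset:
  assumes "ideal K R" "x \<in> carrier R"
  shows "K +> rep (K +> x) = K +> x"
  using cos_eq[OF assms(1) rep_carr[OF assms] assms(2) rep_diff[OF assms]] .

lemma (in ring) cos_sub_iff:
  assumes "ideal K R" "ideal L R" "K \<subseteq> L" "x \<in> carrier R"
  shows "(K +> x \<subseteq> L) \<longleftrightarrow> x \<in> L"
proof -
  interpret K: ideal K R by fact
  interpret L: ideal L R by fact
  have x: "x \<in> K +> x" using K.a_rcos_self assms by simp
  show ?thesis
  proof
    assume "K +> x \<subseteq> L" then show "x \<in> L" using x by blast
  next
    assume "x \<in> L"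
    show "K +> x \<subseteq> L"
      unfolding a_r_coset_def r_coset_def using assms \<open>x \<in> L\<close> L.a_closed by auto
  qed
qed

lemma (in ring) finsum_ideal:
  assumes "ideal K R" "finite F" "\<And>j. j \<in> F \<Longrightarrow> f j \<in> K"
  shows "(\<Oplus>j\<in>F. f j) \<in> K"
  using assms(2,3)
proof (induction F rule: finite_induct)
  case empty then show ?case using ideal.Icarr assms(1) additive_subgroup.zero_closed ideal_def by (simp add: additive_subgroup.zero_closed ideal.axioms(1))
next
  case (insert x F)
  have c: "f \<in> F \<rightarrow> carrier R" "f x \<in> carrier R" using insert ideal.Icarr[OF assms(1)] by auto
  then show ?case using insert by (simp add: additive_subgroup.a_closed assms(1) ideal.axioms(1))
qed

lemma (in ring) finsum_diff_ideal:
  assumes "ideal K R" "finite F" "f \<in> F \<rightarrow> carrier R" "g \<in> F \<rightarrow> carrier R"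
    "\<And>j. j \<in> F \<Longrightarrow> f j \<ominus> g j \<in> K"
  shows "(\<Oplus>j\<in>F. f j) \<ominus> (\<Oplus>j\<in>F. g j) \<in> K"
  using assms(2-5)
proof (induction F rule: finite_induct)
  case empty then show ?case by (simp add: minus_eq r_neg additive_subgroup.zero_closed assms(1) ideal.axioms(1))
next
  case (insert x F)
  have c: "f \<in> F \<rightarrow> carrier R" "f x \<in> carrier R" "g \<in> F \<rightarrow> carrier R" "g x \<in> carrier R"
    using insert by auto
  have e: "(f x \<oplus> finsum R f F) \<ominus> (g x \<oplus> finsum R g F) = (f x \<ominus> g x) \<oplus> (finsum R f F \<ominus> finsum R g F)"
    using c by (simp add: minus_eq minus_add a_ac)
  show ?case using insert c e
    by (simp add: additive_subgroup.a_closed assms(1) ideal.axioms(1))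
qed

lemma (in ring) diff_prod:
  assumes "r \<in> carrier R" "s \<in> carrier R" "m \<in> carrier R" "n \<in> carrier R"
  shows "r \<otimes> s \<ominus> m \<otimes> n = (r \<ominus> m) \<otimes> s \<oplus> m \<otimes> (s \<ominus> n)"
proof -
  have e: "\<ominus>(m\<otimes>s) \<oplus> (m\<otimes>s \<oplus> \<ominus>(m\<otimes>n)) = \<ominus>(m\<otimes>n)"
    using assms by (simp add: a_assoc[symmetric] l_neg)
  show ?thesis using assms e by (simp add: minus_eq l_distr r_distr l_minus r_minus a_assoc)
qed

lemma (in ring) finsum_swap:
  assumes "finite A" "finite B" "\<And>i j. i \<in> A \<Longrightarrow> j \<in> B \<Longrightarrow> f i j \<in> carrier R"
  shows "(\<Oplus>i\<in>A. \<Oplus>j\<in>B. f i j) = (\<Oplus>j\<in>B. \<Oplus>i\<in>A. f i j)"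
  using assms(1,3)
proof (induction A rule: finite_induct)
  case empty then show ?case using assms(2) by (simp add: finsum_zero)
next
  case (insert x F)
  have "(\<Oplus>j\<in>B. \<Oplus>i\<in>insert x F. f i j) = (\<Oplus>j\<in>B. f x j \<oplus> (\<Oplus>i\<in>F. f i j))"
    by (rule finsum_cong') (use insert in auto)
  also have "\<dots> = (\<Oplus>j\<in>B. f x j) \<oplus> (\<Oplus>j\<in>B. \<Oplus>i\<in>F. f i j)"
    by (rule finsum_addf) (use insert in auto)
  finally show ?case using insert by (simp add: Pi_def)
qed



definition pim :: "('a,'m) ring_scheme \<Rightarrow> nat \<Rightarrow> (nat \<Rightarrow> nat \<Rightarrow> 'a set) \<Rightarrow> (nat \<Rightarrow> nat \<Rightarrow> 'a) \<Rightarrow> nat \<Rightarrow> nat \<Rightarrow> 'a set" where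
  "pim R d I m = (\<lambda>i j. if i \<in> {1..d} \<and> j \<in> {1..d} then I i (d+1) +>\<^bsub>R\<^esub> m i j else {})"

definition Vset :: "nat \<Rightarrow> (nat \<Rightarrow> nat \<Rightarrow> 'a set) \<Rightarrow> (nat \<Rightarrow> nat \<Rightarrow> 'a) set" where
  "Vset d I = {m. \<forall>i\<in>{1..d}. \<forall>j\<in>{1..d}. m i j \<in> I i j}"

locale dsys = ring R for R (structure) +
  fixes d :: nat and I :: "nat \<Rightarrow> nat \<Rightarrow> 'a set"
  assumes idl: "i \<in> {1..d+1} \<Longrightarrow> j \<in> {1..d+1} \<Longrightarrow> ideal (I i j) R"
  and prd: "i \<in> {1..d+1} \<Longrightarrow> j \<in> {1..d+1} \<Longrightarrow> l \<in> {1..d+1} \<Longrightarrow> ideal_prod R (I i j) (I j l) \<subseteq> I i l"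
  and full: "i \<in> {1..d+1} \<Longrightarrow> j \<in> {1..d+1} \<Longrightarrow> j \<le> i \<Longrightarrow> I i j = carrier R"

lemma dsysI: "d_system R d I \<Longrightarrow> dsys R d I"
  unfolding d_system_def dsys_def dsys_axioms_def by blast

context dsys
begin

abbreviation "A \<equiv> Alg R d I"
abbreviation "\<pi> \<equiv> pim R d I"
abbreviation "V \<equiv> Vset d I"

lemma Icarr: "i \<in> {1..d+1} \<Longrightarrow> j \<in> {1..d+1} \<Longrightarrow> x \<in> I i j \<Longrightarrow> x \<in> carrier R"
  by (rule ideal.Icarr[OF idl])

lemma mulI: "i \<in> {1..d+1} \<Longrightarrow> j \<in> {1..d+1} \<Longrightarrow> l \<in> {1..d+1} \<Longrightarrow> x \<in> I i j \<Longrightarrow> y \<in> I j l \<Longrightarrow> x \<otimes> y \<in> I i l"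
  using prd[of i j l] ideal_prod.prod[of x "I i j" y "I j l" R] by blast

lemma lmul: "i \<in> {1..d+1} \<Longrightarrow> j \<in> {1..d+1} \<Longrightarrow> x \<in> carrier R \<Longrightarrow> y \<in> I i j \<Longrightarrow> x \<otimes> y \<in> I i j"
  by (rule ideal.I_l_closed[OF idl])

lemma rmul: "i \<in> {1..d+1} \<Longrightarrow> j \<in> {1..d+1} \<Longrightarrow> x \<in> carrier R \<Longrightarrow> y \<in> I i j \<Longrightarrow> y \<otimes> x \<in> I i j"
  by (rule ideal.I_r_closed[OF idl])

lemma addI: "i \<in> {1..d+1} \<Longrightarrow> j \<in> {1..d+1} \<Longrightarrow> x \<in> I i j \<Longrightarrow> y \<in> I i j \<Longrightarrow> x \<oplus> y \<in> I i j"
  by (rule additive_subgroup.a_closed[OF ideal.axioms(1)[OF idl]])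

lemma negI: "i \<in> {1..d+1} \<Longrightarrow> j \<in> {1..d+1} \<Longrightarrow> x \<in> I i j \<Longrightarrow> \<ominus> x \<in> I i j"
  by (rule additive_subgroup.a_inv_closed[OF ideal.axioms(1)[OF idl]])

lemma minusI: "i \<in> {1..d+1} \<Longrightarrow> j \<in> {1..d+1} \<Longrightarrow> x \<in> I i j \<Longrightarrow> y \<in> I i j \<Longrightarrow> x \<ominus> y \<in> I i j"
  using addI negI by (simp add: minus_eq)

lemma zeroI: "i \<in> {1..d+1} \<Longrightarrow> j \<in> {1..d+1} \<Longrightarrow> \<zero> \<in> I i j"
  by (rule additive_subgroup.zero_closed[OF ideal.axioms(1)[OF idl]])

lemma Isub:
  assumes "i \<in> {1..d+1}" "1 \<le> j" "j \<le> l" "l \<le> d+1"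
  shows "I i l \<subseteq> I i j"
proof
  fix x assume x: "x \<in> I i l"
  have "x = x \<otimes> \<one>" using Icarr[OF assms(1) _ x] assms by simp
  also have "\<dots> \<in> I i j"
  proof -
    have "\<one> \<in> I l j" using full[of l j] assms by auto
    moreover have "l \<in> {1..d+1}" "j \<in> {1..d+1}" using assms by auto
    ultimately show ?thesis using mulI[OF assms(1) _ _ x] by blast
  qed
  finally show "x \<in> I i j" .
qed

lemma Isub1: "i \<in> {1..d+1} \<Longrightarrow> j \<in> {1..d+1} \<Longrightarrow> I i (d+1) \<subseteq> I i j"
  by (rule Isub) auto

lemma idl1: "i \<in> {1..d} \<Longrightarrow> ideal (I i (d+1)) R"
  by (rule idl) auto

lemma rep_pi:
  assumes "i \<in> {1..d}" "x \<in> carrier R"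
  shows "rep (I i (d+1) +> x) \<ominus> x \<in> I i (d+1)" "rep (I i (d+1) +> x) \<in> carrier R"
  using rep_diff[OF idl1[OF assms(1)] assms(2)] rep_carr[OF idl1[OF assms(1)] assms(2)] by auto

lemma pi_cong: "(\<And>i j. i \<in> {1..d} \<Longrightarrow> j \<in> {1..d} \<Longrightarrow> f i j = g i j) \<Longrightarrow> \<pi> f = \<pi> g"
  unfolding pim_def by (intro ext) auto

lemma V_carr: "m \<in> V \<Longrightarrow> i \<in> {1..d} \<Longrightarrow> j \<in> {1..d} \<Longrightarrow> m i j \<in> carrier R"
  unfolding Vset_def using Icarr by force

lemma carrier_A: "carrier A = \<pi> ` V"
proof
  show "\<pi> ` V \<subseteq> carrier A"
    unfolding Alg_def pim_def Vset_def Xset_def by auto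
next
  show "carrier A \<subseteq> \<pi> ` V"
  proof
    fix M assume M: "M \<in> carrier A"
    define m where "m = (\<lambda>i j. SOME x. x \<in> I i j \<and> M i j = I i (d+1) +> x)"
    have h: "m i j \<in> I i j \<and> M i j = I i (d+1) +> m i j" if "i \<in> {1..d}" "j \<in> {1..d}" for i j
    proof -
      have "M i j \<in> Xset R d I i j" using M that unfolding Alg_def by auto
      then have "\<exists>x. x \<in> I i j \<and> M i j = I i (d+1) +> x" unfolding Xset_def by auto
      then show ?thesis unfolding m_def by (rule someI_ex)
    qed
    have "M = \<pi> m"
    proof (intro ext)
      fix i j show "M i j = \<pi> m i j"
        using h[of i j] M unfolding pim_def Alg_def by auto
    qed
    moreover have "m \<in> V" using h unfolding Vset_def by auto
    ultimately show "M \<in> \<pi> ` V" by blast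
  qed
qed

lemma pi_in: "m \<in> V \<Longrightarrow> \<pi> m \<in> carrier A"
  using carrier_A by auto

lemma add_pi:
  assumes "m \<in> V" "n \<in> V"
  shows "\<pi> m \<oplus>\<^bsub>A\<^esub> \<pi> n = \<pi> (\<lambda>i j. m i j \<oplus> n i j)"
proof (intro ext)
  fix i j
  show "(\<pi> m \<oplus>\<^bsub>A\<^esub> \<pi> n) i j = \<pi> (\<lambda>i j. m i j \<oplus> n i j) i j"
  proof (cases "i \<in> {1..d} \<and> j \<in> {1..d}")
    case True
    then have c: "m i j \<in> carrier R" "n i j \<in> carrier R" using V_carr assms by auto
    let ?K = "I i (d+1)"
    let ?r = "rep (?K +> m i j)" and ?s = "rep (?K +> n i j)"
    have r: "?r \<ominus> m i j \<in> ?K" "?r \<in> carrier R" "?s \<ominus> n i j \<in> ?K" "?s \<in> carrier R"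
      using rep_pi True c by auto
    have e: "(?r \<oplus> ?s) \<ominus> (m i j \<oplus> n i j) = (?r \<ominus> m i j) \<oplus> (?s \<ominus> n i j)"
      using r c by (simp add: minus_eq minus_add a_ac)
    have "?K +> (?r \<oplus> ?s) = ?K +> (m i j \<oplus> n i j)"
      apply (rule cos_eq) using True idl r c e addI[of i "d+1"] by auto
    then show ?thesis using True unfolding Alg_def pim_def by simp
  next
    case False then show ?thesis unfolding Alg_def pim_def by auto
  qed
qed

lemma mul_pi:
  assumes "m \<in> V" "n \<in> V"
  shows "\<pi> m \<otimes>\<^bsub>A\<^esub> \<pi> n = \<pi> (\<lambda>i l. \<Oplus>j\<in>{1..d}. m i j \<otimes> n j l)"
proof (intro ext)
  fix i l
  show "(\<pi> m \<otimes>\<^bsub>A\<^esub> \<pi> n) i l = \<pi> (\<lambda>i l. \<Oplus>j\<in>{1..d}. m i j \<otimes> n j l) i l"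
  proof (cases "i \<in> {1..d} \<and> l \<in> {1..d}")
    case True
    let ?K = "I i (d+1)"
    have t: "rep (\<pi> m i j) \<otimes> rep (\<pi> n j l) \<ominus> m i j \<otimes> n j l \<in> ?K"
         "rep (\<pi> m i j) \<otimes> rep (\<pi> n j l) \<in> carrier R" "m i j \<otimes> n j l \<in> carrier R"
      if j: "j \<in> {1..d}" for j
    proof -
      have c: "m i j \<in> carrier R" "n j l \<in> carrier R" using V_carr assms True j by auto
      let ?r = "rep (I i (d+1) +> m i j)" and ?s = "rep (I j (d+1) +> n j l)"
      have r: "?r \<ominus> m i j \<in> ?K" "?r \<in> carrier R" "?s \<ominus> n j l \<in> I j (d+1)" "?s \<in> carrier R"
        using rep_pi True c j by auto
      have e: "?r \<otimes> ?s \<ominus> m i j \<otimes> n j l = (?r \<ominus> m i j) \<otimes> ?s \<oplus> m i j \<otimes> (?s \<ominus> n j l)"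
        using r c by (rule_tac diff_prod) auto
      have mij: "m i j \<in> I i j" using assms True j unfolding Vset_def by auto
      have "(?r \<ominus> m i j) \<otimes> ?s \<in> ?K" using rmul r True by auto
      moreover have "m i j \<otimes> (?s \<ominus> n j l) \<in> ?K" using mulI[OF _ _ _ mij r(3)] True j by auto
      ultimately have "?r \<otimes> ?s \<ominus> m i j \<otimes> n j l \<in> ?K" using e addI True by auto
      then show "rep (\<pi> m i j) \<otimes> rep (\<pi> n j l) \<ominus> m i j \<otimes> n j l \<in> ?K"
        "rep (\<pi> m i j) \<otimes> rep (\<pi> n j l) \<in> carrier R" "m i j \<otimes> n j l \<in> carrier R"
        using True j r c unfolding pim_def by auto
    qed
    have "?K +> (\<Oplus>j\<in>{1..d}. rep (\<pi> m i j) \<otimes> rep (\<pi> n j l)) = ?K +> (\<Oplus>j\<in>{1..d}. m i j \<otimes> n j l)"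
      apply (rule cos_eq)
      using True idl apply simp
        apply (rule finsum_closed) using t apply blast
       apply (rule finsum_closed) using t apply blast
      apply (rule finsum_diff_ideal) using True idl t by auto
    then show ?thesis using True unfolding Alg_def pim_def by simp
  next
    case False then show ?thesis unfolding Alg_def pim_def by auto
  qed
qed

lemma zero_pi: "\<zero>\<^bsub>A\<^esub> = \<pi> (\<lambda>i j. \<zero>)"
  unfolding Alg_def pim_def by simp

lemma one_pi: "\<one>\<^bsub>A\<^esub> = \<pi> (\<lambda>i j. if i = j then \<one> else \<zero>)"
  unfolding Alg_def pim_def by (intro ext) simp

lemma e_pi: "idem_e R d I k = \<pi> (\<lambda>i j. if i = k \<and> j = k then \<one> else \<zero>)"
  unfolding idem_e_def pim_def by (intro ext) simp

lemma V_add: "m \<in> V \<Longrightarrow> n \<in> V \<Longrightarrow> (\<lambda>i j. m i j \<oplus> n i j) \<in> V"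
  unfolding Vset_def using addI by auto

lemma V_neg: "m \<in> V \<Longrightarrow> (\<lambda>i j. \<ominus> m i j) \<in> V"
  unfolding Vset_def using negI by auto

lemma V_zero: "(\<lambda>i j. \<zero>) \<in> V"
  unfolding Vset_def using zeroI by auto

lemma V_one: "(\<lambda>i j. if i = j then \<one> else \<zero>) \<in> V"
  unfolding Vset_def using zeroI full by auto

lemma V_mul: "m \<in> V \<Longrightarrow> n \<in> V \<Longrightarrow> (\<lambda>i l. \<Oplus>j\<in>{1..d}. m i j \<otimes> n j l) \<in> V"
  unfolding Vset_def
proof (clarify)
  fix i l assume h: "\<forall>i\<in>{1..d}. \<forall>j\<in>{1..d}. m i j \<in> I i j" "\<forall>i\<in>{1..d}. \<forall>j\<in>{1..d}. n i j \<in> I i j"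
    "i \<in> {1..d}" "l \<in> {1..d}"
  show "(\<Oplus>j\<in>{1..d}. m i j \<otimes> n j l) \<in> I i l"
  proof (rule finsum_ideal)
    show "ideal (I i l) R" using h by (intro idl) auto
    fix j assume "j \<in> {1..d}"
    then show "m i j \<otimes> n j l \<in> I i l" using h by (intro mulI[of i j l]) auto
  qed auto
qed

lemma V_mulc: "m \<in> V \<Longrightarrow> n \<in> V \<Longrightarrow> i \<in> {1..d} \<Longrightarrow> l \<in> {1..d} \<Longrightarrow> j \<in> {1..d} \<Longrightarrow> m i j \<otimes> n j l \<in> carrier R"
  using V_carr by auto

lemma ring_A: "ring A"
proof (rule ringI)
  show "abelian_group A"
  proof (rule abelian_groupI)
    fix x y assume "x \<in> carrier A" "y \<in> carrier A"
    then obtain m n where "m \<in> V" "n \<in> V" "x = \<pi> m" "y = \<pi> n" using carrier_A by auto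
    then show "x \<oplus>\<^bsub>A\<^esub> y \<in> carrier A" using add_pi V_add pi_in by simp
  next
    show "\<zero>\<^bsub>A\<^esub> \<in> carrier A" using zero_pi V_zero pi_in by simp
  next
    fix x y z assume "x \<in> carrier A" "y \<in> carrier A" "z \<in> carrier A"
    then obtain m n p where h: "m \<in> V" "n \<in> V" "p \<in> V" "x = \<pi> m" "y = \<pi> n" "z = \<pi> p" using carrier_A by auto
    then show "x \<oplus>\<^bsub>A\<^esub> y \<oplus>\<^bsub>A\<^esub> z = x \<oplus>\<^bsub>A\<^esub> (y \<oplus>\<^bsub>A\<^esub> z)"
      using add_pi V_add by (auto intro!: pi_cong simp: a_assoc V_carr)
  next
    fix x y assume "x \<in> carrier A" "y \<in> carrier A"
    then obtain m n where h: "m \<in> V" "n \<in> V" "x = \<pi> m" "y = \<pi> n" using carrier_A by auto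
    then show "x \<oplus>\<^bsub>A\<^esub> y = y \<oplus>\<^bsub>A\<^esub> x"
      using add_pi by (auto intro!: pi_cong simp: a_comm V_carr)
  next
    fix x assume "x \<in> carrier A"
    then obtain m where h: "m \<in> V" "x = \<pi> m" using carrier_A by auto
    then show "\<zero>\<^bsub>A\<^esub> \<oplus>\<^bsub>A\<^esub> x = x"
      using add_pi zero_pi V_zero by (auto intro!: pi_cong simp: V_carr)
  next
    fix x assume "x \<in> carrier A"
    then obtain m where h: "m \<in> V" "x = \<pi> m" using carrier_A by auto
    have "\<pi> (\<lambda>i j. \<ominus> m i j) \<oplus>\<^bsub>A\<^esub> x = \<zero>\<^bsub>A\<^esub>"
      using add_pi zero_pi V_neg h by (auto intro!: pi_cong simp: V_carr l_neg)
    then show "\<exists>y\<in>carrier A. y \<oplus>\<^bsub>A\<^esub> x = \<zero>\<^bsub>A\<^esub>" using pi_in V_neg h by blast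
  qed
next
  show "monoid A"
  proof (rule monoidI)
    fix x y assume "x \<in> carrier A" "y \<in> carrier A"
    then obtain m n where "m \<in> V" "n \<in> V" "x = \<pi> m" "y = \<pi> n" using carrier_A by auto
    then show "x \<otimes>\<^bsub>A\<^esub> y \<in> carrier A" using mul_pi V_mul pi_in by simp
  next
    show "\<one>\<^bsub>A\<^esub> \<in> carrier A" using one_pi V_one pi_in by simp
  next
    fix x y z assume "x \<in> carrier A" "y \<in> carrier A" "z \<in> carrier A"
    then obtain m n p where h: "m \<in> V" "n \<in> V" "p \<in> V" "x = \<pi> m" "y = \<pi> n" "z = \<pi> p" using carrier_A by auto
    have "(\<Oplus>l\<in>{1..d}. (\<Oplus>j\<in>{1..d}. m i j \<otimes> n j l) \<otimes> p l q) = (\<Oplus>j\<in>{1..d}. m i j \<otimes> (\<Oplus>l\<in>{1..d}. n j l \<otimes> p l q))"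
      if "i \<in> {1..d}" "q \<in> {1..d}" for i q
    proof -
      have "(\<Oplus>l\<in>{1..d}. (\<Oplus>j\<in>{1..d}. m i j \<otimes> n j l) \<otimes> p l q) = (\<Oplus>l\<in>{1..d}. \<Oplus>j\<in>{1..d}. m i j \<otimes> n j l \<otimes> p l q)"
        by (rule finsum_cong') (use h that in \<open>auto simp: finsum_ldistr V_carr\<close>)
      also have "\<dots> = (\<Oplus>j\<in>{1..d}. \<Oplus>l\<in>{1..d}. m i j \<otimes> n j l \<otimes> p l q)"
        by (rule finsum_swap) (use h that in \<open>auto simp: V_carr\<close>)
      also have "\<dots> = (\<Oplus>j\<in>{1..d}. m i j \<otimes> (\<Oplus>l\<in>{1..d}. n j l \<otimes> p l q))"
      proof (rule finsum_cong')
        fix j assume j: "j \<in> {1..d}"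
        have "m i j \<otimes> (\<Oplus>l\<in>{1..d}. n j l \<otimes> p l q) = (\<Oplus>l\<in>{1..d}. m i j \<otimes> (n j l \<otimes> p l q))"
          by (rule finsum_rdistr) (use h that j in \<open>auto simp: V_carr\<close>)
        also have "\<dots> = (\<Oplus>l\<in>{1..d}. m i j \<otimes> n j l \<otimes> p l q)"
          by (rule finsum_cong') (use h that j in \<open>auto simp: V_carr m_assoc\<close>)
        finally show "(\<Oplus>l\<in>{1..d}. m i j \<otimes> n j l \<otimes> p l q) = m i j \<otimes> (\<Oplus>l\<in>{1..d}. n j l \<otimes> p l q)" by simp
      qed (use h that in \<open>auto simp: V_carr\<close>)
      finally show ?thesis .
    qed
    then show "x \<otimes>\<^bsub>A\<^esub> y \<otimes>\<^bsub>A\<^esub> z = x \<otimes>\<^bsub>A\<^esub> (y \<otimes>\<^bsub>A\<^esub> z)"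
      using h mul_pi V_mul by (auto intro!: pi_cong)
  next
    fix x assume "x \<in> carrier A"
    then obtain m where h: "m \<in> V" "x = \<pi> m" using carrier_A by auto
    have "(\<Oplus>j\<in>{1..d}. (if i = j then \<one> else \<zero>) \<otimes> m j l) = m i l" if "i \<in> {1..d}" "l \<in> {1..d}" for i l
    proof -
      have "(\<Oplus>j\<in>{1..d}. (if i = j then \<one> else \<zero>) \<otimes> m j l) = (\<Oplus>j\<in>{1..d}. if i = j then m j l else \<zero>)"
        by (rule finsum_cong') (use h that in \<open>auto simp: V_carr\<close>)
      also have "\<dots> = m i l" by (rule finsum_singleton) (use h that in \<open>auto simp: V_carr\<close>)
      finally show ?thesis .
    qed
    then show "\<one>\<^bsub>A\<^esub> \<otimes>\<^bsub>A\<^esub> x = x"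
      using h mul_pi one_pi V_one by (auto intro!: pi_cong)
  next
    fix x assume "x \<in> carrier A"
    then obtain m where h: "m \<in> V" "x = \<pi> m" using carrier_A by auto
    have "(\<Oplus>j\<in>{1..d}. m i j \<otimes> (if j = l then \<one> else \<zero>)) = m i l" if "i \<in> {1..d}" "l \<in> {1..d}" for i l
    proof -
      have "(\<Oplus>j\<in>{1..d}. m i j \<otimes> (if j = l then \<one> else \<zero>)) = (\<Oplus>j\<in>{1..d}. if l = j then m i j else \<zero>)"
        by (rule finsum_cong') (use h that in \<open>auto simp: V_carr\<close>)
      also have "\<dots> = m i l" by (rule finsum_singleton) (use h that in \<open>auto simp: V_carr\<close>)
      finally show ?thesis .
    qed
    then show "x \<otimes>\<^bsub>A\<^esub> \<one>\<^bsub>A\<^esub> = x"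
      using h mul_pi one_pi V_one by (auto intro!: pi_cong)
  qed
next
  fix x y z assume "x \<in> carrier A" "y \<in> carrier A" "z \<in> carrier A"
  then obtain m n p where h: "m \<in> V" "n \<in> V" "p \<in> V" "x = \<pi> m" "y = \<pi> n" "z = \<pi> p" using carrier_A by auto
  have "(\<Oplus>j\<in>{1..d}. (m i j \<oplus> n i j) \<otimes> p j l) = (\<Oplus>j\<in>{1..d}. m i j \<otimes> p j l) \<oplus> (\<Oplus>j\<in>{1..d}. n i j \<otimes> p j l)"
    if "i \<in> {1..d}" "l \<in> {1..d}" for i l
  proof -
    have "(\<Oplus>j\<in>{1..d}. (m i j \<oplus> n i j) \<otimes> p j l) = (\<Oplus>j\<in>{1..d}. m i j \<otimes> p j l \<oplus> n i j \<otimes> p j l)"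
      by (rule finsum_cong') (use h that in \<open>auto simp: V_carr l_distr\<close>)
    also have "\<dots> = (\<Oplus>j\<in>{1..d}. m i j \<otimes> p j l) \<oplus> (\<Oplus>j\<in>{1..d}. n i j \<otimes> p j l)"
      by (rule finsum_addf) (use h that in \<open>auto simp: V_carr\<close>)
    finally show ?thesis .
  qed
  then show "(x \<oplus>\<^bsub>A\<^esub> y) \<otimes>\<^bsub>A\<^esub> z = x \<otimes>\<^bsub>A\<^esub> z \<oplus>\<^bsub>A\<^esub> y \<otimes>\<^bsub>A\<^esub> z"
    using h mul_pi add_pi V_mul V_add by (auto intro!: pi_cong)
next
  fix x y z assume "x \<in> carrier A" "y \<in> carrier A" "z \<in> carrier A"
  then obtain m n p where h: "m \<in> V" "n \<in> V" "p \<in> V" "x = \<pi> m" "y = \<pi> n" "z = \<pi> p" using carrier_A by auto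
  have "(\<Oplus>j\<in>{1..d}. p i j \<otimes> (m j l \<oplus> n j l)) = (\<Oplus>j\<in>{1..d}. p i j \<otimes> m j l) \<oplus> (\<Oplus>j\<in>{1..d}. p i j \<otimes> n j l)"
    if "i \<in> {1..d}" "l \<in> {1..d}" for i l
  proof -
    have "(\<Oplus>j\<in>{1..d}. p i j \<otimes> (m j l \<oplus> n j l)) = (\<Oplus>j\<in>{1..d}. p i j \<otimes> m j l \<oplus> p i j \<otimes> n j l)"
      by (rule finsum_cong') (use h that in \<open>auto simp: V_carr r_distr\<close>)
    also have "\<dots> = (\<Oplus>j\<in>{1..d}. p i j \<otimes> m j l) \<oplus> (\<Oplus>j\<in>{1..d}. p i j \<otimes> n j l)"
      by (rule finsum_addf) (use h that in \<open>auto simp: V_carr\<close>)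
    finally show ?thesis .
  qed
  then show "z \<otimes>\<^bsub>A\<^esub> (x \<oplus>\<^bsub>A\<^esub> y) = z \<otimes>\<^bsub>A\<^esub> x \<oplus>\<^bsub>A\<^esub> z \<otimes>\<^bsub>A\<^esub> y"
    using h mul_pi add_pi V_mul V_add by (auto intro!: pi_cong)
qed

end


context dsys
begin

lemma sum_if:
  assumes "finite F" "g \<in> carrier R"
  shows "(\<Oplus>j\<in>F. if j = j0 then g else \<zero>) = (if j0 \<in> F then g else \<zero>)"
proof (cases "j0 \<in> F")
  case True
  have "(\<Oplus>j\<in>F. if j = j0 then g else \<zero>) = (\<Oplus>j\<in>F. if j0 = j then (\<lambda>_. g) j else \<zero>)"
    by (rule finsum_cong') (use assms in auto)
  also have "\<dots> = g" by (rule finsum_singleton) (use assms True in auto)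
  finally show ?thesis using True by simp
next
  case False
  have "(\<Oplus>j\<in>F. if j = j0 then g else \<zero>) = (\<Oplus>j\<in>F. \<zero>)"
    by (rule finsum_cong') (use assms False in auto)
  then show ?thesis using False by simp
qed

lemma neg_pi:
  assumes "m \<in> V"
  shows "\<ominus>\<^bsub>A\<^esub> \<pi> m = \<pi> (\<lambda>i j. \<ominus> m i j)"
proof (rule abelian_group.minus_equality[OF ring.is_abelian_group[OF ring_A]])
  show "\<pi> (\<lambda>i j. \<ominus> m i j) \<oplus>\<^bsub>A\<^esub> \<pi> m = \<zero>\<^bsub>A\<^esub>"
    using add_pi zero_pi V_neg assms by (auto intro!: pi_cong simp: V_carr l_neg)
  show "\<pi> m \<in> carrier A" using pi_in assms by simp
  show "\<pi> (\<lambda>i j. \<ominus> m i j) \<in> carrier A" using pi_in V_neg assms by simp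
qed

lemma minus_pi:
  assumes "m \<in> V" "n \<in> V"
  shows "\<pi> m \<ominus>\<^bsub>A\<^esub> \<pi> n = \<pi> (\<lambda>i j. m i j \<ominus> n i j)"
proof -
  have "\<pi> m \<ominus>\<^bsub>A\<^esub> \<pi> n = \<pi> m \<oplus>\<^bsub>A\<^esub> \<pi> (\<lambda>i j. \<ominus> n i j)"
    using neg_pi assms by (simp add: a_minus_def)
  also have "\<dots> = \<pi> (\<lambda>i j. m i j \<ominus> n i j)"
    using add_pi V_neg assms by (auto intro!: pi_cong simp: minus_eq)
  finally show ?thesis .
qed

lemma pi_eq_mod:
  assumes "\<And>i j. i \<in> {1..d} \<Longrightarrow> j \<in> {1..d} \<Longrightarrow> m i j \<in> carrier R \<and> n i j \<in> carrier R \<and> m i j \<ominus> n i j \<in> I i (d+1)"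
  shows "\<pi> m = \<pi> n"
  unfolding pim_def
proof (intro ext)
  fix i j show "(if i \<in> {1..d} \<and> j \<in> {1..d} then I i (d + 1) +> m i j else {}) =
         (if i \<in> {1..d} \<and> j \<in> {1..d} then I i (d + 1) +> n i j else {})"
    using cos_eq[OF idl1] assms by auto
qed

lemma pi_eqD:
  assumes "\<pi> m = \<pi> n" "i \<in> {1..d}" "j \<in> {1..d}" "m i j \<in> carrier R" "n i j \<in> carrier R"
  shows "m i j \<ominus> n i j \<in> I i (d+1)"
proof -
  have "\<pi> m i j = \<pi> n i j" using assms by simp
  then have "I i (d+1) +> m i j = I i (d+1) +> n i j" using assms unfolding pim_def by simp
  then show ?thesis using cos_eqD[OF idl1] assms by auto
qed

definition Sk :: "nat \<Rightarrow> (nat \<Rightarrow> nat \<Rightarrow> 'a set) set" where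
  "Sk k = {M \<in> carrier A. \<forall>i\<in>{1..d}. \<forall>j\<in>{1..d}. j \<le> k \<longrightarrow> M i j \<subseteq> I i (k+1)}"

lemma Sk_pi:
  assumes "m \<in> V" "k \<le> d"
  shows "\<pi> m \<in> Sk k \<longleftrightarrow> (\<forall>i\<in>{1..d}. \<forall>j\<in>{1..d}. j \<le> k \<longrightarrow> m i j \<in> I i (k+1))"
proof -
  have "\<pi> m i j \<subseteq> I i (k+1) \<longleftrightarrow> m i j \<in> I i (k+1)" if "i \<in> {1..d}" "j \<in> {1..d}" for i j
  proof -
    have "I i (d+1) +> m i j \<subseteq> I i (k+1) \<longleftrightarrow> m i j \<in> I i (k+1)"
    proof (rule cos_sub_iff[OF idl1 _ Isub1])
      show "ideal (I i (k + 1)) R" using that assms by (intro idl) auto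
    qed (use that assms V_carr in auto)
    then show ?thesis using that unfolding pim_def by simp
  qed
  then show ?thesis unfolding Sk_def using pi_in assms by auto
qed

lemma Sk_ideal:
  assumes "k \<le> d"
  shows "ideal (Sk k) A"
proof (rule idealI[OF ring_A])
  have grp: "group (add_monoid A)"
    by (rule abelian_group.a_group[OF ring.is_abelian_group[OF ring_A]])
  show "subgroup (Sk k) (add_monoid A)"
  proof (rule group.subgroupI[OF grp])
    show "Sk k \<subseteq> carrier (add_monoid A)" unfolding Sk_def by auto
    have "\<pi> (\<lambda>i j. \<zero>) \<in> Sk k" using Sk_pi[OF V_zero assms] zeroI assms by auto
    then show "Sk k \<noteq> {}" by blast
  next
    fix a assume "a \<in> Sk k"
    then obtain m where m: "m \<in> V" "a = \<pi> m" "\<forall>i\<in>{1..d}. \<forall>j\<in>{1..d}. j \<le> k \<longrightarrow> m i j \<in> I i (k+1)"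
      using carrier_A Sk_pi assms unfolding Sk_def by auto
    have "inv\<^bsub>add_monoid A\<^esub> a = \<ominus>\<^bsub>A\<^esub> a" by (simp add: a_inv_def)
    also have "\<dots> = \<pi> (\<lambda>i j. \<ominus> m i j)" using neg_pi m by simp
    also have "\<dots> \<in> Sk k" using Sk_pi[OF V_neg[OF m(1)] assms] m(3) negI assms by auto
    finally show "inv\<^bsub>add_monoid A\<^esub> a \<in> Sk k" .
  next
    fix a b assume "a \<in> Sk k" "b \<in> Sk k"
    then obtain m n where m: "m \<in> V" "a = \<pi> m" "\<forall>i\<in>{1..d}. \<forall>j\<in>{1..d}. j \<le> k \<longrightarrow> m i j \<in> I i (k+1)"
      and n: "n \<in> V" "b = \<pi> n" "\<forall>i\<in>{1..d}. \<forall>j\<in>{1..d}. j \<le> k \<longrightarrow> n i j \<in> I i (k+1)"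
      using carrier_A Sk_pi assms unfolding Sk_def by auto
    have "a \<otimes>\<^bsub>add_monoid A\<^esub> b = \<pi> (\<lambda>i j. m i j \<oplus> n i j)" using add_pi m n by simp
    also have "\<dots> \<in> Sk k" using Sk_pi[OF V_add[OF m(1) n(1)] assms] m(3) n(3) addI assms by auto
    finally show "a \<otimes>\<^bsub>add_monoid A\<^esub> b \<in> Sk k" .
  qed
next
  fix a x assume "a \<in> Sk k" "x \<in> carrier A"
  then obtain m w where m: "m \<in> V" "a = \<pi> m" "\<forall>i\<in>{1..d}. \<forall>j\<in>{1..d}. j \<le> k \<longrightarrow> m i j \<in> I i (k+1)"
    and w: "w \<in> V" "x = \<pi> w"
    using carrier_A Sk_pi assms unfolding Sk_def by auto
  have "(\<Oplus>l\<in>{1..d}. w i l \<otimes> m l j) \<in> I i (k+1)" if "i \<in> {1..d}" "j \<in> {1..d}" "j \<le> k" for i j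
  proof (rule finsum_ideal)
    show "ideal (I i (k + 1)) R" using that assms by (intro idl) auto
    fix l assume l: "l \<in> {1..d}"
    have "w i l \<in> I i l" using w that l unfolding Vset_def by auto
    moreover have "m l j \<in> I l (k+1)" using m that l by auto
    ultimately show "w i l \<otimes> m l j \<in> I i (k + 1)" using that l assms by (intro mulI[of i l]) auto
  qed auto
  then show "x \<otimes>\<^bsub>A\<^esub> a \<in> Sk k" using mul_pi[OF w(1) m(1)] Sk_pi[OF V_mul[OF w(1) m(1)] assms] m w by auto
next
  fix a x assume "a \<in> Sk k" "x \<in> carrier A"
  then obtain m w where m: "m \<in> V" "a = \<pi> m" "\<forall>i\<in>{1..d}. \<forall>j\<in>{1..d}. j \<le> k \<longrightarrow> m i j \<in> I i (k+1)"
    and w: "w \<in> V" "x = \<pi> w"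
    using carrier_A Sk_pi assms unfolding Sk_def by auto
  have "(\<Oplus>l\<in>{1..d}. m i l \<otimes> w l j) \<in> I i (k+1)" if "i \<in> {1..d}" "j \<in> {1..d}" "j \<le> k" for i j
  proof (rule finsum_ideal)
    show "ideal (I i (k + 1)) R" using that assms by (intro idl) auto
    fix l assume l: "l \<in> {1..d}"
    have "m i l \<in> I i (k+1)"
    proof (cases "l \<le> k")
      case True then show ?thesis using m that l by auto
    next
      case False
      have "m i l \<in> I i l" using m that l unfolding Vset_def by auto
      moreover have "I i l \<subseteq> I i (k+1)" using that l False by (intro Isub) auto
      ultimately show ?thesis by auto
    qed
    then show "m i l \<otimes> w l j \<in> I i (k + 1)" using that l assms V_carr[OF w(1)] by (intro rmul) auto
  qed auto
  then show "a \<otimes>\<^bsub>A\<^esub> x \<in> Sk k" using mul_pi[OF m(1) w(1)] Sk_pi[OF V_mul[OF m(1) w(1)] assms] m w by auto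
qed

lemma finsumA_pi:
  assumes "finite F" "\<And>l. l \<in> F \<Longrightarrow> g l \<in> V"
  shows "finsum A (\<lambda>l. \<pi> (g l)) F = \<pi> (\<lambda>i j. \<Oplus>l\<in>F. g l i j)"
  using assms
proof (induction F rule: finite_induct)
  case empty
  interpret RA: ring A by (rule ring_A)
  show ?case using zero_pi by simp
next
  case (insert x F)
  interpret RA: ring A by (rule ring_A)
  have VF: "(\<lambda>i j. \<Oplus>l\<in>F. g l i j) \<in> V"
    unfolding Vset_def
  proof (clarify)
    fix i j assume "i \<in> {1..d}" "j \<in> {1..d}"
    then show "(\<Oplus>l\<in>F. g l i j) \<in> I i j"
      using insert by (intro finsum_ideal[OF idl]) (auto simp: Vset_def)
  qed
  have "finsum A (\<lambda>l. \<pi> (g l)) (insert x F) = \<pi> (g x) \<oplus>\<^bsub>A\<^esub> finsum A (\<lambda>l. \<pi> (g l)) F"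
    by (rule RA.finsum_insert) (use insert pi_in in auto)
  also have "\<dots> = \<pi> (\<lambda>i j. g x i j \<oplus> (\<Oplus>l\<in>F. g l i j))"
    using insert add_pi VF by simp
  also have "\<dots> = \<pi> (\<lambda>i j. \<Oplus>l\<in>insert x F. g l i j)"
    by (rule pi_cong) (use insert in \<open>auto simp: V_carr Pi_def\<close>)
  finally show ?case .
qed

lemma f_pi: "idem_f R d I k = \<pi> (\<lambda>i j. if i = j \<and> k < i then \<one> else \<zero>)"
proof -
  let ?g = "\<lambda>l i j. if i = l \<and> j = l then \<one> else \<zero>"
  have gV: "?g l \<in> V" if "l \<in> {k<..d}" for l
    unfolding Vset_def using that full zeroI by auto
  have "idem_f R d I k = finsum A (\<lambda>l. \<pi> (?g l)) {k<..d}"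
    unfolding idem_f_def e_pi by simp
  also have "\<dots> = \<pi> (\<lambda>i j. \<Oplus>l\<in>{k<..d}. ?g l i j)"
    by (rule finsumA_pi) (use gV in auto)
  also have "\<dots> = \<pi> (\<lambda>i j. if i = j \<and> k < i then \<one> else \<zero>)"
  proof (rule pi_cong)
    fix i j assume ij: "i \<in> {1..d}" "j \<in> {1..d}"
    have "(\<Oplus>l\<in>{k<..d}. ?g l i j) = (\<Oplus>l\<in>{k<..d}. if l = i then (if i = j then \<one> else \<zero>) else \<zero>)"
      by (rule finsum_cong') auto
    also have "\<dots> = (if i = j \<and> k < i then \<one> else \<zero>)"
      using sum_if[of "{k<..d}" "if i = j then \<one> else \<zero>" i] ij by auto
    finally show "(\<Oplus>l\<in>{k<..d}. ?g l i j) = (if i = j \<and> k < i then \<one> else \<zero>)" .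
  qed
  finally show ?thesis .
qed

lemma fV: "(\<lambda>i j. if i = j \<and> k < i then \<one> else \<zero>) \<in> V"
  unfolding Vset_def using full zeroI by auto

lemma Jid_ideal: "ideal (Jid R d I k) A"
  unfolding Jid_def using f_pi fV pi_in by (intro ring.genideal_ideal[OF ring_A]) auto

lemma f_in_Jid: "idem_f R d I k \<in> Jid R d I k"
  unfolding Jid_def using f_pi fV pi_in by (intro ring.genideal_self'[OF ring_A]) auto

lemma Jid_sub: "k \<le> d \<Longrightarrow> Jid R d I k \<subseteq> Sk k"
  unfolding Jid_def
proof (rule ring.genideal_minimal[OF ring_A Sk_ideal])
  assume "k \<le> d"
  then show "{idem_f R d I k} \<subseteq> Sk k"
    using f_pi Sk_pi[OF fV] zeroI by auto
qed

end


locale dk = dsys +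
  fixes k :: nat
  assumes k1: "1 \<le> k" and kd: "k \<le> d"
begin

abbreviation "J \<equiv> Jid R d I k"
abbreviation "J' \<equiv> Jid R d I (k-1)"
abbreviation "E c \<equiv> \<pi> (\<lambda>i l. if l = k then c i else \<zero>)"
abbreviation "cm c \<equiv> (\<lambda>i. if i \<in> {1..d} then I i (k+1) +> c i else {})"
abbreviation "T \<equiv> Tmod R d I (d+1-k)"
abbreviation "CV \<equiv> {c. \<forall>i\<in>{1..d}. c i \<in> I i k}"

lemma kin: "k \<in> {1..d}" using k1 kd by auto

lemma idlk: "i \<in> {1..d} \<Longrightarrow> ideal (I i (k+1)) R"
  using kd by (intro idl) auto

lemma CV_carr: "c \<in> CV \<Longrightarrow> i \<in> {1..d} \<Longrightarrow> c i \<in> carrier R"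
proof -
  assume "c \<in> CV" "i \<in> {1..d}"
  then have "c i \<in> I i k" by simp
  then show "c i \<in> carrier R" using Icarr[of i k "c i"] kd k1 \<open>i \<in> {1..d}\<close> by simp
qed

lemma EV: "c \<in> CV \<Longrightarrow> (\<lambda>i l. if l = k then c i else \<zero>) \<in> V"
  unfolding Vset_def mem_Collect_eq
proof (intro ballI)
  fix i j assume "\<forall>i\<in>{1..d}. c i \<in> I i k" "i \<in> {1..d}" "j \<in> {1..d}"
  then show "(if j = k then c i else \<zero>) \<in> I i j" using zeroI[of i j] by simp
qed

lemma V_minus: "m \<in> V \<Longrightarrow> n \<in> V \<Longrightarrow> (\<lambda>i j. m i j \<ominus> n i j) \<in> V"
proof -
  assume mn: "m \<in> V" "n \<in> V"
  show ?thesis unfolding Vset_def mem_Collect_eq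
  proof (intro ballI)
    fix i j assume "i \<in> {1..d}" "j \<in> {1..d}"
    then show "m i j \<ominus> n i j \<in> I i j" using minusI[of i j] mn unfolding Vset_def by simp
  qed
qed

lemma cm_eq:
  assumes "\<And>i. i \<in> {1..d} \<Longrightarrow> c i \<in> carrier R \<and> c' i \<in> carrier R \<and> c i \<ominus> c' i \<in> I i (k+1)"
  shows "cm c = cm c'"
proof (intro ext)
  fix i show "cm c i = cm c' i"
  proof (cases "i \<in> {1..d}")
    case True then show ?thesis using cos_eq[OF idlk[OF True]] assms[OF True] by simp
  next
    case False then show ?thesis by auto
  qed
qed

lemma cm_eqD:
  assumes "cm c = cm c'" "i \<in> {1..d}" "c i \<in> carrier R" "c' i \<in> carrier R"
  shows "c i \<ominus> c' i \<in> I i (k+1)"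
proof -
  have "cm c i = cm c' i" using fun_cong[OF assms(1), of i] by simp
  then show ?thesis using cos_eqD[OF idlk[OF assms(2)]] assms by simp
qed

lemma cosK:
  assumes "i \<in> {1..d}" "x \<in> carrier R"
  shows "I i (k+1) +> rep (I i (d+1) +> x) = I i (k+1) +> x"
proof (rule cos_eq[OF idlk[OF assms(1)]])
  show "rep (I i (d + 1) +> x) \<in> carrier R" using rep_pi assms by auto
  have "rep (I i (d + 1) +> x) \<ominus> x \<in> I i (d+1)" using rep_pi assms by auto
  moreover have "I i (d+1) \<subseteq> I i (k+1)" using assms kd by (intro Isub1) auto
  ultimately show "rep (I i (d + 1) +> x) \<ominus> x \<in> I i (k + 1)" by auto
qed (use assms in auto)

lemma dk_eq: "d + 2 - (d + 1 - k) = k + 1" using kd by simp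

lemma Tcar: "t \<in> lcarrier T \<longleftrightarrow> (\<exists>y. (\<forall>i\<in>{1..d}. y i \<in> carrier R) \<and> t = cm y)"
proof
  assume t: "t \<in> lcarrier T"
  have h: "\<exists>x\<in>carrier R. t i = I i (k+1) +> x" if "i \<in> {1..d}" for i
  proof -
    have "\<forall>i. if i \<in> {1..d} then t i \<in> (\<Union>a\<in>carrier R. {I i (k+1) +> a}) else t i = {}"
      using t unfolding Tmod_def dk_eq A_RCOSETS_def' by simp
    then have "t i \<in> (\<Union>a\<in>carrier R. {I i (k+1) +> a})" using that by metis
    then show ?thesis by blast
  qed
  define y where "y = (\<lambda>i. SOME x. x \<in> carrier R \<and> t i = I i (k+1) +> x)"
  have y: "y i \<in> carrier R \<and> t i = I i (k+1) +> y i" if "i \<in> {1..d}" for i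
    unfolding y_def by (rule someI_ex) (use h[OF that] in auto)
  have "t = cm y"
  proof
    fix i show "t i = cm y i" using y[of i] t unfolding Tmod_def dk_eq by auto
  qed
  then show "\<exists>y. (\<forall>i\<in>{1..d}. y i \<in> carrier R) \<and> t = cm y" using y by blast
next
  assume "\<exists>y. (\<forall>i\<in>{1..d}. y i \<in> carrier R) \<and> t = cm y"
  then obtain y where y: "\<forall>i\<in>{1..d}. y i \<in> carrier R" "t = cm y" by blast
  have "t i \<in> (\<Union>a\<in>carrier R. {I i (k+1) +> a})" if "i \<in> {1..d}" for i
    using y that by auto
  moreover have "t i = {}" if "i \<notin> {1..d}" for i using y that by auto
  ultimately show "t \<in> lcarrier T" unfolding Tmod_def dk_eq A_RCOSETS_def' by simp
qed

lemma Tadd: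
  assumes "\<And>i. i \<in> {1..d} \<Longrightarrow> y i \<in> carrier R \<and> z i \<in> carrier R"
  shows "ladd T (cm y) (cm z) = cm (\<lambda>i. y i \<oplus> z i)"
proof
  fix i
  show "ladd T (cm y) (cm z) i = cm (\<lambda>i. y i \<oplus> z i) i"
  proof (cases "i \<in> {1..d}")
    case True
    let ?K = "I i (k+1)"
    have c: "y i \<in> carrier R" "z i \<in> carrier R" using assms True by auto
    let ?r = "rep (?K +> y i)" and ?s = "rep (?K +> z i)"
    have r: "?r \<ominus> y i \<in> ?K" "?r \<in> carrier R" "?s \<ominus> z i \<in> ?K" "?s \<in> carrier R"
      using rep_diff[OF idlk[OF True]] rep_carr[OF idlk[OF True]] c by auto
    have e: "(?r \<oplus> ?s) \<ominus> (y i \<oplus> z i) = (?r \<ominus> y i) \<oplus> (?s \<ominus> z i)"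
      using r c by (simp add: minus_eq minus_add a_ac)
    have "?K +> (?r \<oplus> ?s) = ?K +> (y i \<oplus> z i)"
    proof (rule cos_eq[OF idlk[OF True]])
      show "?r \<oplus> ?s \<ominus> (y i \<oplus> z i) \<in> I i (k + 1)"
        unfolding e using r idlk[OF True] by (simp add: additive_subgroup.a_closed ideal.axioms(1))
    qed (use r c in auto)
    then show ?thesis using True unfolding Tmod_def dk_eq by simp
  next
    case False then show ?thesis unfolding Tmod_def by auto
  qed
qed

lemma Tact:
  assumes w: "w \<in> V" and y: "\<And>i. i \<in> {1..d} \<Longrightarrow> y i \<in> carrier R"
  shows "lact T (\<pi> w) (cm y) = cm (\<lambda>i. \<Oplus>j\<in>{1..d}. w i j \<otimes> y j)"
proof
  fix i
  show "lact T (\<pi> w) (cm y) i = cm (\<lambda>i. \<Oplus>j\<in>{1..d}. w i j \<otimes> y j) i"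
  proof (cases "i \<in> {1..d}")
    case True
    let ?K = "I i (k+1)"
    have t: "rep (\<pi> w i j) \<otimes> rep (cm y j) \<ominus> w i j \<otimes> y j \<in> ?K"
         "rep (\<pi> w i j) \<otimes> rep (cm y j) \<in> carrier R" "w i j \<otimes> y j \<in> carrier R"
      if j: "j \<in> {1..d}" for j
    proof -
      have c: "w i j \<in> carrier R" "y j \<in> carrier R" using V_carr w y True j by auto
      let ?r = "rep (I i (d+1) +> w i j)" and ?s = "rep (I j (k+1) +> y j)"
      have r: "?r \<ominus> w i j \<in> I i (d+1)" "?r \<in> carrier R" "?s \<ominus> y j \<in> I j (k+1)" "?s \<in> carrier R"
        using rep_pi True c j rep_diff[OF idlk[OF j]] rep_carr[OF idlk[OF j]] by auto
      have e: "?r \<otimes> ?s \<ominus> w i j \<otimes> y j = (?r \<ominus> w i j) \<otimes> ?s \<oplus> w i j \<otimes> (?s \<ominus> y j)"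
        using r c by (rule_tac diff_prod) auto
      have wij: "w i j \<in> I i j" using w True j unfolding Vset_def by auto
      have "I i (d+1) \<subseteq> ?K" using True kd by (intro Isub1) auto
      then have "(?r \<ominus> w i j) \<otimes> ?s \<in> ?K" using rmul[of i "k+1"] r True kd by auto
      moreover have "w i j \<otimes> (?s \<ominus> y j) \<in> ?K" using mulI[OF _ _ _ wij r(3)] True j kd by auto
      ultimately have "?r \<otimes> ?s \<ominus> w i j \<otimes> y j \<in> ?K" using e addI[of i "k+1"] True kd by auto
      then show "rep (\<pi> w i j) \<otimes> rep (cm y j) \<ominus> w i j \<otimes> y j \<in> ?K"
        "rep (\<pi> w i j) \<otimes> rep (cm y j) \<in> carrier R" "w i j \<otimes> y j \<in> carrier R"
        using True j r c unfolding pim_def by auto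
    qed
    have "?K +> (\<Oplus>j\<in>{1..d}. rep (\<pi> w i j) \<otimes> rep (cm y j)) = ?K +> (\<Oplus>j\<in>{1..d}. w i j \<otimes> y j)"
      apply (rule cos_eq[OF idlk[OF True]])
        apply (rule finsum_closed) using t apply blast
       apply (rule finsum_closed) using t apply blast
      apply (rule finsum_diff_ideal[OF idlk[OF True]]) using t by auto
    then show ?thesis using True unfolding Tmod_def dk_eq by simp
  next
    case False then show ?thesis unfolding Tmod_def by auto
  qed
qed

lemma Tzero': "Tzero R d I (d+1-k) = cm (\<lambda>i. \<zero>)"
  unfolding Tzero_def dk_eq by simp

lemma mul_e:
  assumes "m \<in> V"
  shows "\<pi> m \<otimes>\<^bsub>A\<^esub> idem_e R d I k = E (\<lambda>i. m i k)"
proof -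
  have eV: "(\<lambda>i j. if i = k \<and> j = k then \<one> else \<zero>) \<in> V"
    unfolding Vset_def using zeroI full by auto
  show ?thesis unfolding e_pi mul_pi[OF assms eV]
  proof (rule pi_cong)
    fix i l assume il: "i \<in> {1..d}" "l \<in> {1..d}"
    have "(\<Oplus>j\<in>{1..d}. m i j \<otimes> (if j = k \<and> l = k then \<one> else \<zero>)) =
          (\<Oplus>j\<in>{1..d}. if j = k then (if l = k then m i k else \<zero>) else \<zero>)"
      by (rule finsum_cong') (use assms il V_carr in auto)
    also have "\<dots> = (if l = k then m i k else \<zero>)"
      using sum_if[of "{1..d}" "if l = k then m i k else \<zero>" k] kin V_carr[OF assms il(1) kin] by auto
    finally show "(\<Oplus>j\<in>{1..d}. m i j \<otimes> (if j = k \<and> l = k then \<one> else \<zero>)) = (if l = k then m i k else \<zero>)" .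
  qed
qed

lemma E_carr: "c \<in> CV \<Longrightarrow> E c \<in> carrier A"
  using pi_in EV by auto

lemma Jideal: "ideal J A" by (rule Jid_ideal)

lemma Dcar: "lcarrier (Delta R d I k) = {J +>\<^bsub>A\<^esub> E c | c. c \<in> CV}"
proof -
  interpret JI: ideal J A by (rule Jideal)
  have eA: "idem_e R d I k \<in> carrier A"
    unfolding e_pi by (rule pi_in) (auto simp: Vset_def zeroI full)
  have "lcarrier (Delta R d I k) = {[mod J:] x \<Otimes>\<^bsub>A\<^esub> (J +>\<^bsub>A\<^esub> idem_e R d I k) | x. x \<in> a_rcosets\<^bsub>A\<^esub> J}"
    unfolding Delta_def Let_def FactRing_def by simp
  also have "\<dots> = {J +>\<^bsub>A\<^esub> E c | c. c \<in> CV}"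
  proof (intro equalityI subsetI)
    fix z assume "z \<in> {[mod J:] x \<Otimes>\<^bsub>A\<^esub> (J +>\<^bsub>A\<^esub> idem_e R d I k) | x. x \<in> a_rcosets\<^bsub>A\<^esub> J}"
    then obtain a where a: "a \<in> carrier A" "z = [mod J:] (J +>\<^bsub>A\<^esub> a) \<Otimes>\<^bsub>A\<^esub> (J +>\<^bsub>A\<^esub> idem_e R d I k)"
      unfolding A_RCOSETS_def' by auto
    obtain m where m: "m \<in> V" "a = \<pi> m" using a carrier_A by auto
    have "z = J +>\<^bsub>A\<^esub> (a \<otimes>\<^bsub>A\<^esub> idem_e R d I k)" using a JI.rcoset_mult_add eA by simp
    also have "\<dots> = J +>\<^bsub>A\<^esub> E (\<lambda>i. m i k)" using mul_e m by simp
    finally show "z \<in> {J +>\<^bsub>A\<^esub> E c | c. c \<in> CV}" using m kin unfolding Vset_def by auto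
  next
    fix z assume "z \<in> {J +>\<^bsub>A\<^esub> E c | c. c \<in> CV}"
    then obtain c where c: "c \<in> CV" "z = J +>\<^bsub>A\<^esub> E c" by auto
    have ee: "E (\<lambda>i. if k = k then c i else \<zero>) = E c" by (simp cong: if_cong)
    have "E c \<otimes>\<^bsub>A\<^esub> idem_e R d I k = E c"
      using mul_e[OF EV[OF c(1)]] ee by simp
    then have "z = [mod J:] (J +>\<^bsub>A\<^esub> E c) \<Otimes>\<^bsub>A\<^esub> (J +>\<^bsub>A\<^esub> idem_e R d I k)"
      using c JI.rcoset_mult_add eA E_carr by simp
    moreover have "J +>\<^bsub>A\<^esub> E c \<in> a_rcosets\<^bsub>A\<^esub> J" using E_carr[OF c(1)] unfolding A_RCOSETS_def' by auto
    ultimately show "z \<in> {[mod J:] x \<Otimes>\<^bsub>A\<^esub> (J +>\<^bsub>A\<^esub> idem_e R d I k) | x. x \<in> a_rcosets\<^bsub>A\<^esub> J}" by blast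
  qed
  finally show ?thesis .
qed

lemma Dadd:
  assumes "c \<in> CV" "c' \<in> CV"
  shows "ladd (Delta R d I k) (J +>\<^bsub>A\<^esub> E c) (J +>\<^bsub>A\<^esub> E c') = J +>\<^bsub>A\<^esub> E (\<lambda>i. c i \<oplus> c' i)"
proof -
  interpret JI: ideal J A by (rule Jideal)
  have "ladd (Delta R d I k) (J +>\<^bsub>A\<^esub> E c) (J +>\<^bsub>A\<^esub> E c') = J +>\<^bsub>A\<^esub> (E c \<oplus>\<^bsub>A\<^esub> E c')"
    unfolding Delta_def Let_def FactRing_def using JI.a_rcos_sum E_carr assms by simp
  also have "E c \<oplus>\<^bsub>A\<^esub> E c' = E (\<lambda>i. c i \<oplus> c' i)"
    using add_pi[OF EV[OF assms(1)] EV[OF assms(2)]] by (auto intro!: pi_cong)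
  finally show ?thesis .
qed

lemma CV_mul:
  assumes "w \<in> V" "c \<in> CV"
  shows "(\<lambda>i. \<Oplus>j\<in>{1..d}. w i j \<otimes> c j) \<in> CV"
proof (clarify)
  fix i assume i: "i \<in> {1..d}"
  show "(\<Oplus>j\<in>{1..d}. w i j \<otimes> c j) \<in> I i k"
  proof (rule finsum_ideal)
    show "ideal (I i k) R" using i kd k1 by (intro idl) auto
    fix j assume j: "j \<in> {1..d}"
    have "w i j \<in> I i j" "c j \<in> I j k" using assms i j unfolding Vset_def by auto
    then show "w i j \<otimes> c j \<in> I i k" using i j kd k1 by (intro mulI[of i j k]) auto
  qed auto
qed

lemma Dact:
  assumes "w \<in> V" "c \<in> CV"
  shows "lact (Delta R d I k) (\<pi> w) (J +>\<^bsub>A\<^esub> E c) = J +>\<^bsub>A\<^esub> E (\<lambda>i. \<Oplus>j\<in>{1..d}. w i j \<otimes> c j)"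
proof -
  interpret JI: ideal J A by (rule Jideal)
  have "lact (Delta R d I k) (\<pi> w) (J +>\<^bsub>A\<^esub> E c) = J +>\<^bsub>A\<^esub> (\<pi> w \<otimes>\<^bsub>A\<^esub> E c)"
    unfolding Delta_def Let_def FactRing_def using JI.rcoset_mult_add E_carr pi_in assms by simp
  also have "\<pi> w \<otimes>\<^bsub>A\<^esub> E c = E (\<lambda>i. \<Oplus>j\<in>{1..d}. w i j \<otimes> c j)"
    unfolding mul_pi[OF assms(1) EV[OF assms(2)]]
  proof (rule pi_cong)
    fix i l assume il: "i \<in> {1..d}" "l \<in> {1..d}"
    show "(\<Oplus>j\<in>{1..d}. w i j \<otimes> (if l = k then c j else \<zero>)) = (if l = k then \<Oplus>j\<in>{1..d}. w i j \<otimes> c j else \<zero>)"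
    proof (cases "l = k")
      case True then show ?thesis by simp
    next
      case False
      have "(\<Oplus>j\<in>{1..d}. w i j \<otimes> (if l = k then c j else \<zero>)) = (\<Oplus>j\<in>{1..d}. \<zero>)"
        by (rule finsum_cong') (use False assms il V_carr in auto)
      then show ?thesis using False by simp
    qed
  qed
  finally show ?thesis .
qed

lemma Jsub: "x \<in> J \<Longrightarrow> \<exists>u\<in>V. x = \<pi> u \<and> (\<forall>i\<in>{1..d}. \<forall>j\<in>{1..d}. j \<le> k \<longrightarrow> u i j \<in> I i (k+1))"
proof -
  assume "x \<in> J"
  then have x: "x \<in> Sk k" using Jid_sub kd by auto
  then obtain u where "u \<in> V" "x = \<pi> u" using carrier_A unfolding Sk_def by auto
  then show ?thesis using x Sk_pi kd by auto
qed

lemma Jlow: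
  assumes c: "\<And>i. i \<in> {1..d} \<Longrightarrow> c i \<in> I i (k+1)"
  shows "E c \<in> J"
proof (cases "k = d")
  case True
  interpret JI: ideal J A by (rule Jideal)
  have "E c = \<pi> (\<lambda>i j. \<zero>)"
  proof (rule pi_eq_mod)
    fix i j assume ij: "i \<in> {1..d}" "j \<in> {1..d}"
    have ci: "c i \<in> I i (d+1)" using c ij True by auto
    have cc: "c i \<in> carrier R" using Icarr[of i "d+1" "c i"] ci ij by auto
    show "(if j = k then c i else \<zero>) \<in> carrier R \<and> \<zero> \<in> carrier R \<and> (if j = k then c i else \<zero>) \<ominus> \<zero> \<in> I i (d + 1)"
      using ci cc zeroI[of i "d+1"] ij by (auto simp: minus_eq)
  qed
  then show ?thesis using zero_pi additive_subgroup.zero_closed[OF ideal.axioms(1)[OF Jideal]] by simp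
next
  case False
  interpret JI: ideal J A by (rule Jideal)
  let ?b = "\<lambda>i l. if l = k+1 then c i else \<zero>"
  let ?g = "\<lambda>i l. if i = k+1 \<and> l = k then \<one> else \<zero>"
  have k1d: "k+1 \<in> {1..d}" using False kd by auto
  have cc: "i \<in> {1..d} \<Longrightarrow> c i \<in> carrier R" for i using c Icarr[of _ "k+1"] kd by force
  have bV: "?b \<in> V" unfolding Vset_def using c zeroI by auto
  have gV: "?g \<in> V" unfolding Vset_def using zeroI full kd by auto
  have "\<pi> ?b \<otimes>\<^bsub>A\<^esub> idem_f R d I k = \<pi> ?b"
    unfolding f_pi mul_pi[OF bV fV]
  proof (rule pi_cong)
    fix i l assume il: "i \<in> {1..d}" "l \<in> {1..d}"
    have "(\<Oplus>j\<in>{1..d}. ?b i j \<otimes> (if j = l \<and> k < j then \<one> else \<zero>)) =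
          (\<Oplus>j\<in>{1..d}. if j = k+1 then (if l = k+1 then c i else \<zero>) else \<zero>)"
      by (rule finsum_cong') (use cc il in auto)
    also have "\<dots> = ?b i l" using sum_if[of "{1..d}" "if l = k+1 then c i else \<zero>" "k+1"] k1d cc[OF il(1)] by auto
    finally show "(\<Oplus>j\<in>{1..d}. ?b i j \<otimes> (if j = l \<and> k < j then \<one> else \<zero>)) = ?b i l" .
  qed
  moreover have "\<pi> ?b \<otimes>\<^bsub>A\<^esub> idem_f R d I k \<in> J"
    using JI.I_l_closed[OF f_in_Jid] pi_in[OF bV] by simp
  ultimately have bJ: "\<pi> ?b \<in> J" by simp
  have "\<pi> ?b \<otimes>\<^bsub>A\<^esub> \<pi> ?g = E c"
    unfolding mul_pi[OF bV gV]
  proof (rule pi_cong)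
    fix i l assume il: "i \<in> {1..d}" "l \<in> {1..d}"
    have "(\<Oplus>j\<in>{1..d}. ?b i j \<otimes> ?g j l) =
          (\<Oplus>j\<in>{1..d}. if j = k+1 then (if l = k then c i else \<zero>) else \<zero>)"
      by (rule finsum_cong') (use cc il in auto)
    also have "\<dots> = (if l = k then c i else \<zero>)" using sum_if[of "{1..d}" "if l = k then c i else \<zero>" "k+1"] k1d cc[OF il(1)] by auto
    finally show "(\<Oplus>j\<in>{1..d}. ?b i j \<otimes> ?g j l) = (if l = k then c i else \<zero>)" .
  qed
  moreover have "\<pi> ?b \<otimes>\<^bsub>A\<^esub> \<pi> ?g \<in> J"
    using JI.I_r_closed[OF bJ] pi_in[OF gV] by simp
  ultimately show ?thesis by simp
qed

end


context dk
begin

definition phi :: "(nat \<Rightarrow> nat \<Rightarrow> 'a set) set \<Rightarrow> nat \<Rightarrow> 'a set" where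
  "phi C = (\<lambda>i. if i \<in> {1..d} then I i (k+1) +> rep (rep C i k) else {})"

lemma phi_E:
  assumes c: "c \<in> CV"
  shows "phi (J +>\<^bsub>A\<^esub> E c) = cm c"
proof -
  have EA: "E c \<in> carrier A" using E_carr[OF c] .
  let ?y = "rep (J +>\<^bsub>A\<^esub> E c)"
  have y: "?y \<in> carrier A" using ring.rep_carr[OF ring_A Jideal EA] .
  have yd: "?y \<ominus>\<^bsub>A\<^esub> E c \<in> J" using ring.rep_diff[OF ring_A Jideal EA] .
  obtain v where v: "v \<in> V" "?y = \<pi> v" using y carrier_A by auto
  have "\<pi> v \<ominus>\<^bsub>A\<^esub> E c = \<pi> (\<lambda>i j. v i j \<ominus> (if j = k then c i else \<zero>))"
    using minus_pi[OF v(1) EV[OF c]] .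
  then have "\<pi> (\<lambda>i j. v i j \<ominus> (if j = k then c i else \<zero>)) \<in> Sk k"
    using yd v Jid_sub[OF kd] by auto
  then have vk': "\<forall>i\<in>{1..d}. \<forall>j\<in>{1..d}. j \<le> k \<longrightarrow> v i j \<ominus> (if j = k then c i else \<zero>) \<in> I i (k+1)"
    by (simp only: Sk_pi[OF V_minus[OF v(1) EV[OF c]] kd])
  have vk: "v i k \<ominus> c i \<in> I i (k+1)" if "i \<in> {1..d}" for i
  proof -
    have "v i k \<ominus> (if k = k then c i else \<zero>) \<in> I i (k+1)"
      using vk' that kin by blast
    then show ?thesis by simp
  qed
  show ?thesis unfolding phi_def
  proof (intro ext)
    fix i
    show "(if i \<in> {1..d} then I i (k+1) +> rep (?y i k) else {}) = cm c i"
    proof (cases "i \<in> {1..d}")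
      case True
      have vc: "v i k \<in> carrier R" using V_carr[OF v(1) True kin] .
      have "?y i k = I i (d+1) +> v i k" using v True kin unfolding pim_def by simp
      then have "I i (k+1) +> rep (?y i k) = I i (k+1) +> v i k" using cosK[OF True vc] by simp
      also have "\<dots> = I i (k+1) +> c i"
        using cos_eq[OF idlk[OF True] vc CV_carr[OF c True] vk[OF True]] .
      finally show ?thesis using True by simp
    next
      case False then show ?thesis by auto
    qed
  qed
qed

lemma JT_simps:
  "lcarrier (JT R d I (k-1) (d+1-k)) = prod_sub (Tzero R d I (d+1-k)) T J'"
  "ladd (JT R d I (k-1) (d+1-k)) = ladd T"
  "lact (JT R d I (k-1) (d+1-k)) = lact T"
  unfolding JT_def Let_def by simp_all

lemma Ec_J':
  assumes c: "c \<in> CV"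
  shows "E c \<in> J'"
proof -
  interpret JI: ideal J' A by (rule Jid_ideal)
  have "E c \<otimes>\<^bsub>A\<^esub> idem_f R d I (k-1) = E c"
    unfolding f_pi mul_pi[OF EV[OF c] fV]
  proof (rule pi_cong)
    fix i l assume il: "i \<in> {1..d}" "l \<in> {1..d}"
    have ci: "c i \<in> carrier R" using CV_carr[OF c il(1)] .
    have "(\<Oplus>j\<in>{1..d}. (if j = k then c i else \<zero>) \<otimes> (if j = l \<and> k - 1 < j then \<one> else \<zero>)) =
          (\<Oplus>j\<in>{1..d}. if j = k then (if l = k then c i else \<zero>) else \<zero>)"
      by (rule finsum_cong') (use ci il k1 in auto)
    also have "\<dots> = (if l = k then c i else \<zero>)"
      using sum_if[of "{1..d}" "if l = k then c i else \<zero>" k] kin ci by auto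
    finally show "(\<Oplus>j\<in>{1..d}. (if j = k then c i else \<zero>) \<otimes> (if j = l \<and> k - 1 < j then \<one> else \<zero>)) =
          (if l = k then c i else \<zero>)" .
  qed
  moreover have "E c \<otimes>\<^bsub>A\<^esub> idem_f R d I (k-1) \<in> J'"
    using JI.I_l_closed[OF f_in_Jid] E_carr[OF c] by simp
  ultimately show ?thesis by simp
qed

lemma PS: "lcarrier (JT R d I (k-1) (d+1-k)) = {cm c | c. c \<in> CV}"
proof (intro equalityI subsetI)
  fix x assume "x \<in> lcarrier (JT R d I (k-1) (d+1-k))"
  then have "x \<in> prod_sub (Tzero R d I (d+1-k)) T J'" using JT_simps by simp
  then show "x \<in> {cm c | c. c \<in> CV}"
  proof (induction rule: prod_sub.induct)
    case zero
    have "(\<lambda>i. \<zero>) \<in> CV" using zeroI kd k1 by auto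
    then show ?case unfolding Tzero'
      by (intro CollectI exI[of _ "\<lambda>i. \<zero>"]) simp
  next
    case (gen a t)
    have km: "k-1 \<le> d" using kd by simp
    have "a \<in> Sk (k-1)" using gen(1) Jid_sub[OF km] by blast
    then obtain w where w: "w \<in> V" "a = \<pi> w" using carrier_A unfolding Sk_def by auto
    have wS: "\<forall>i\<in>{1..d}. \<forall>j\<in>{1..d}. j \<le> k-1 \<longrightarrow> w i j \<in> I i (k-1+1)"
      using Sk_pi[OF w(1), of "k-1"] \<open>a \<in> Sk (k-1)\<close> w kd by auto
    obtain y where y: "\<forall>i\<in>{1..d}. y i \<in> carrier R" "t = cm y" using Tcar gen(2) by auto
    have "lact T a t = cm (\<lambda>i. \<Oplus>j\<in>{1..d}. w i j \<otimes> y j)" using Tact[OF w(1)] y w by simp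
    moreover have "(\<lambda>i. \<Oplus>j\<in>{1..d}. w i j \<otimes> y j) \<in> CV"
    proof (clarify)
      fix i assume i: "i \<in> {1..d}"
      show "(\<Oplus>j\<in>{1..d}. w i j \<otimes> y j) \<in> I i k"
      proof (rule finsum_ideal)
        show "ideal (I i k) R" using i kd k1 by (intro idl) auto
        fix j assume j: "j \<in> {1..d}"
        have "w i j \<in> I i k"
        proof (cases "j \<le> k-1")
          case True then show ?thesis using wS i j k1 by auto
        next
          case False
          have "w i j \<in> I i j" using w i j unfolding Vset_def by auto
          moreover have "I i j \<subseteq> I i k" using i j False k1 by (intro Isub) auto
          ultimately show ?thesis by auto
        qed
        then show "w i j \<otimes> y j \<in> I i k" using i j y kd k1 by (intro rmul) auto
      qed auto
    qed
    ultimately show ?case by (intro CollectI exI[of _ "\<lambda>i. \<Oplus>j\<in>{1..d}. w i j \<otimes> y j"]) simp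
  next
    case (add x y)
    then obtain c c' where c: "c \<in> CV" "x = cm c" "c' \<in> CV" "y = cm c'" by blast
    have "ladd T x y = cm (\<lambda>i. c i \<oplus> c' i)" using Tadd c CV_carr by simp
    moreover have "(\<lambda>i. c i \<oplus> c' i) \<in> CV" using c addI kd k1 by auto
    ultimately show ?case by (intro CollectI exI[of _ "\<lambda>i. c i \<oplus> c' i"]) simp
  qed
next
  fix x assume "x \<in> {cm c | c. c \<in> CV}"
  then obtain c where c: "c \<in> CV" "x = cm c" by blast
  let ?t0 = "cm (\<lambda>l. if l = k then \<one> else \<zero>)"
  have t0: "?t0 \<in> lcarrier T" unfolding Tcar
    by (intro exI[of _ "\<lambda>l. if l = k then \<one> else \<zero>"]) auto
  have "lact T (E c) ?t0 = cm (\<lambda>i. \<Oplus>j\<in>{1..d}. (if j = k then c i else \<zero>) \<otimes> (if j = k then \<one> else \<zero>))"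
    using Tact[OF EV[OF c(1)]] by simp
  also have "\<dots> = cm c"
  proof (intro ext)
    fix i show "cm (\<lambda>i. \<Oplus>j\<in>{1..d}. (if j = k then c i else \<zero>) \<otimes> (if j = k then \<one> else \<zero>)) i = cm c i"
    proof (cases "i \<in> {1..d}")
      case True
      have ci: "c i \<in> carrier R" using CV_carr[OF c(1) True] .
      have "(\<Oplus>j\<in>{1..d}. (if j = k then c i else \<zero>) \<otimes> (if j = k then \<one> else \<zero>)) =
            (\<Oplus>j\<in>{1..d}. if j = k then c i else \<zero>)"
        by (rule finsum_cong') (use ci in auto)
      also have "\<dots> = c i" using sum_if[of "{1..d}" "c i" k] kin ci by auto
      finally show ?thesis using True by simp
    next
      case False then show ?thesis by auto
    qed
  qed
  finally have "lact T (E c) ?t0 = x" using c by simp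
  moreover have "lact T (E c) ?t0 \<in> prod_sub (Tzero R d I (d+1-k)) T J'"
    by (rule prod_sub.gen[OF Ec_J'[OF c(1)] t0])
  ultimately show "x \<in> lcarrier (JT R d I (k-1) (d+1-k))" using JT_simps by simp
qed

lemma iso: "lmod_iso A (Delta R d I k) (JT R d I (k - 1) (d + 1 - k))"
  unfolding lmod_iso_def
proof (intro exI conjI ballI)
  show "bij_betw phi (lcarrier (Delta R d I k)) (lcarrier (JT R d I (k - 1) (d + 1 - k)))"
    unfolding bij_betw_def
  proof
    show "inj_on phi (lcarrier (Delta R d I k))"
    proof (rule inj_onI)
      fix x y assume x: "x \<in> lcarrier (Delta R d I k)" and y: "y \<in> lcarrier (Delta R d I k)"
        and e: "phi x = phi y"
      obtain c where c: "c \<in> CV" "x = J +>\<^bsub>A\<^esub> E c" using x Dcar by auto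
      obtain c' where c': "c' \<in> CV" "y = J +>\<^bsub>A\<^esub> E c'" using y Dcar by auto
      have "cm c = cm c'" using e c c' phi_E by simp
      then have diff: "c i \<ominus> c' i \<in> I i (k+1)" if "i \<in> {1..d}" for i
        using cm_eqD that CV_carr c c' by auto
      have "E c \<ominus>\<^bsub>A\<^esub> E c' = E (\<lambda>i. c i \<ominus> c' i)"
        unfolding minus_pi[OF EV[OF c(1)] EV[OF c'(1)]]
        by (rule pi_cong) (auto simp: minus_eq)
      also have "\<dots> \<in> J" using Jlow diff by auto
      finally have "E c \<ominus>\<^bsub>A\<^esub> E c' \<in> J" .
      then show "x = y"
        using ring.cos_eq[OF ring_A Jideal E_carr[OF c(1)] E_carr[OF c'(1)]] c c' by simp
    qed
  next
    show "phi ` lcarrier (Delta R d I k) = lcarrier (JT R d I (k - 1) (d + 1 - k))"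
      unfolding PS Dcar
    proof (intro equalityI subsetI)
      fix z assume "z \<in> phi ` {J +>\<^bsub>A\<^esub> E c | c. c \<in> CV}"
      then obtain c where c: "c \<in> CV" "z = phi (J +>\<^bsub>A\<^esub> E c)" by blast
      then have "z = cm c" using phi_E by simp
      then show "z \<in> {cm c | c. c \<in> CV}" using c(1) by blast
    next
      fix z assume "z \<in> {cm c | c. c \<in> CV}"
      then obtain c where c: "c \<in> CV" "z = cm c" by blast
      then have "z = phi (J +>\<^bsub>A\<^esub> E c)" using phi_E by simp
      moreover have "J +>\<^bsub>A\<^esub> E c \<in> {J +>\<^bsub>A\<^esub> E c | c. c \<in> CV}" using c(1) by blast
      ultimately show "z \<in> phi ` {J +>\<^bsub>A\<^esub> E c | c. c \<in> CV}" by blast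
    qed
  qed
next
  fix x y assume x: "x \<in> lcarrier (Delta R d I k)" and y: "y \<in> lcarrier (Delta R d I k)"
  obtain c where c: "c \<in> CV" "x = J +>\<^bsub>A\<^esub> E c" using x Dcar by auto
  obtain c' where c': "c' \<in> CV" "y = J +>\<^bsub>A\<^esub> E c'" using y Dcar by auto
  have s: "(\<lambda>i. c i \<oplus> c' i) \<in> CV" using c c' addI kd k1 by auto
  show "phi (ladd (Delta R d I k) x y) = ladd (JT R d I (k - 1) (d + 1 - k)) (phi x) (phi y)"
    using Dadd[OF c(1) c'(1)] phi_E[OF s] phi_E[OF c(1)] phi_E[OF c'(1)] Tadd[of c c'] CV_carr c c' JT_simps
    by simp
next
  fix a x assume a: "a \<in> carrier A" and x: "x \<in> lcarrier (Delta R d I k)"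
  obtain c where c: "c \<in> CV" "x = J +>\<^bsub>A\<^esub> E c" using x Dcar by auto
  obtain w where w: "w \<in> V" "a = \<pi> w" using a carrier_A by auto
  show "phi (lact (Delta R d I k) a x) = lact (JT R d I (k - 1) (d + 1 - k)) a (phi x)"
    using Dact[OF w(1) c(1)] phi_E[OF CV_mul[OF w(1) c(1)]] phi_E[OF c(1)] Tact[OF w(1), of c]
      CV_carr c w JT_simps by simp
qed

end

theorem lemma4p5:
  fixes R :: "('a,'m) ring_scheme" and d k :: nat and I :: "nat \<Rightarrow> nat \<Rightarrow> 'a set"
  assumes "d_system R d I" and "1 \<le> k" and "k \<le> d"
  shows "lmod_iso (Alg R d I) (Delta R d I k) (JT R d I (k - 1) (d + 1 - k))"
proof -
  have "dk R d I k"
    using dsysI[OF assms(1)] assms(2,3) by (intro dk.intro dk_axioms.intro) auto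
  then interpret dk R d I k .
  show ?thesis by (rule iso)
qed


end
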